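(* $URD(12;K_2,S(C_3))\supseteq J(12)=\{(3,4),(7,2),(11,0)\}$; that is, for each $(r,s)\in\{(3,4),(7,2),(11,0)\}$ there exists a partition of the edge set of $K_{12}$ into $r$ 1-factors and $s$ classes each consisting of two vertex-disjoint 3-suns covering all twelve vertices.
   Context: A 3-sun is the graph on $6$ distinct vertices $a_1,a_2,a_3,b_1,b_2,b_3$ consisting of the triangle $(a_1,a_2,a_3)$ together with the edges $\{a_i,b_i\}$, $i=1,2,3$. $URD(v;K_2,S(C_3))$ denotes the set of pairs $(r,s)$ such that the edge set of $K_v$ can be partitioned into $r$ 1-factors and $s$ classes each of which is a set of vertex-disjoint 3-suns covering every vertex exactly once. *)

theory Defs
  imports Main
begin

definition complete_edges :: "'a set \<Rightarrow> 'a set set" where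
  "complete_edges V = {{x, y} | x y. x \<in> V \<and> y \<in> V \<and> x \<noteq> y}"

definition one_factor :: "'a set \<Rightarrow> 'a set set \<Rightarrow> bool" where
  "one_factor V M \<longleftrightarrow> M \<subseteq> complete_edges V \<and> (\<forall>v\<in>V. \<exists>!e. e \<in> M \<and> v \<in> e)"

text \<open>A 3-sun is given by a 6-tuple (a1,a2,a3,b1,b2,b3) of distinct vertices:
  triangle (a1,a2,a3) plus pendant edges a_i b_i.\<close>
type_synonym 'a sun = "'a \<times> 'a \<times> 'a \<times> 'a \<times> 'a \<times> 'a"

fun sun_verts :: "'a sun \<Rightarrow> 'a set" where
  "sun_verts (a1, a2, a3, b1, b2, b3) = {a1, a2, a3, b1, b2, b3}"

fun sun_edges :: "'a sun \<Rightarrow> 'a set set" where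
  "sun_edges (a1, a2, a3, b1, b2, b3) =
     {{a1, a2}, {a2, a3}, {a1, a3}, {a1, b1}, {a2, b2}, {a3, b3}}"

fun is_sun :: "'a sun \<Rightarrow> bool" where
  "is_sun (a1, a2, a3, b1, b2, b3) = distinct [a1, a2, a3, b1, b2, b3]"

definition sun_class :: "'a set \<Rightarrow> 'a sun set \<Rightarrow> bool" where
  "sun_class V P \<longleftrightarrow> (\<forall>t\<in>P. is_sun t \<and> sun_verts t \<subseteq> V) \<and>
     (\<forall>v\<in>V. \<exists>!t. t \<in> P \<and> v \<in> sun_verts t)"

definition class_edges :: "'a sun set \<Rightarrow> 'a set set" where
  "class_edges P = (\<Union>t\<in>P. sun_edges t)"

definition URD_decomp :: "'a set \<Rightarrow> nat \<Rightarrow> nat \<Rightarrow> bool" where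
  "URD_decomp V r s \<longleftrightarrow>
    (\<exists>(M :: nat \<Rightarrow> 'a set set) (P :: nat \<Rightarrow> 'a sun set).
       (\<forall>i<r. one_factor V (M i)) \<and>
       (\<forall>j<s. sun_class V (P j)) \<and>
       (\<forall>i<r. \<forall>i'<r. i \<noteq> i' \<longrightarrow> M i \<inter> M i' = {}) \<and>
       (\<forall>j<s. \<forall>j'<s. j \<noteq> j' \<longrightarrow> class_edges (P j) \<inter> class_edges (P j') = {}) \<and>
       (\<forall>i<r. \<forall>j<s. M i \<inter> class_edges (P j) = {}) \<and>
       (\<Union>i<r. M i) \<union> (\<Union>j<s. class_edges (P j)) = complete_edges V)"

definition URD :: "nat \<Rightarrow> (nat \<times> nat) set" where
  "URD v = {(r, s). URD_decomp {0..<v} r s}"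

end

theory Submission
  imports Defs
begin

definition edges :: "('a \<times> 'a) list \<Rightarrow> 'a set set" where
  "edges L = (\<lambda>(a,b). {a,b}) ` set L"

fun sun_list :: "'a sun \<Rightarrow> ('a \<times> 'a) list" where
  "sun_list (a1, a2, a3, b1, b2, b3) = [(a1,a2),(a2,a3),(a1,a3),(a1,b1),(a2,b2),(a3,b3)]"

fun sun_vl :: "'a sun \<Rightarrow> 'a list" where
  "sun_vl (a1, a2, a3, b1, b2, b3) = [a1, a2, a3, b1, b2, b3]"

definition sl :: "'a sun list \<Rightarrow> ('a \<times> 'a) list" where
  "sl T = concat (map sun_list T)"

definition disj :: "('a \<times> 'a) list \<Rightarrow> ('a \<times> 'a) list \<Rightarrow> bool" where
  "disj L1 L2 = list_all (\<lambda>(a,b). (a,b) \<notin> set L2 \<and> (b,a) \<notin> set L2) L1"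

lemma edge_mem: "{x,y} \<in> edges L \<longleftrightarrow> (x,y) \<in> set L \<or> (y,x) \<in> set L"
  unfolding edges_def by (auto simp: doubleton_eq_iff)

lemma disj_lemma: "disj L1 L2 \<Longrightarrow> edges L1 \<inter> edges L2 = {}"
  unfolding disj_def edges_def list_all_iff by (fastforce simp: doubleton_eq_iff)

lemma sun_edges_eq: "sun_edges t = edges (sun_list t)"
  by (cases t) (auto simp: edges_def)

lemma sun_verts_eq: "sun_verts t = set (sun_vl t)"
  by (cases t) auto

lemma class_edges_eq: "class_edges (set T) = edges (sl T)"
  unfolding class_edges_def sl_def edges_def by (auto simp: sun_edges_eq edges_def)

lemma filter1:
  assumes "length (filter Q xs) = 1"
  shows "\<exists>p. p \<in> set xs \<and> Q p \<and> (\<forall>q\<in>set xs. Q q \<longrightarrow> q = p)"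
proof -
  obtain p where "filter Q xs = [p]" using assms by (auto simp: length_Suc_conv)
  then have "set (filter Q xs) = {p}" by simp
  then show ?thesis by auto
qed

lemma one_factor_lemma:
  assumes "list_all (\<lambda>(a,b). a<n \<and> b<n \<and> a\<noteq>b) L"
    and "list_all (\<lambda>v. length (filter (\<lambda>(a,b). a=v \<or> b=v) L) = 1) [0..<n]"
  shows "one_factor {0..<n} (edges L)"
  unfolding one_factor_def
proof
  show "edges L \<subseteq> complete_edges {0..<n}"
    using assms(1) unfolding edges_def complete_edges_def list_all_iff by fastforce
  show "\<forall>v\<in>{0..<n}. \<exists>!e. e \<in> edges L \<and> v \<in> e"
  proof
    fix v assume "v \<in> {0..<n}"
    then have "length (filter (\<lambda>(a,b). a=v \<or> b=v) L) = 1"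
      using assms(2) by (auto simp: list_all_iff)
    from filter1[OF this] obtain p where p: "p \<in> set L" "(\<lambda>(a,b). a=v \<or> b=v) p"
      "\<forall>q\<in>set L. (\<lambda>(a,b). a=v \<or> b=v) q \<longrightarrow> q = p" by blast
    show "\<exists>!e. e \<in> edges L \<and> v \<in> e"
    proof (rule ex1I[where a="(\<lambda>(a,b). {a,b}) p"])
      show "(\<lambda>(a,b). {a,b}) p \<in> edges L \<and> v \<in> (\<lambda>(a,b). {a,b}) p"
        using p(1,2) unfolding edges_def by (auto split: prod.splits)
      fix e assume "e \<in> edges L \<and> v \<in> e"
      then obtain q where "q \<in> set L" "e = (\<lambda>(a,b). {a,b}) q" "v \<in> e"
        unfolding edges_def by auto
      with p(3) show "e = (\<lambda>(a,b). {a,b}) p" by (cases q) fastforce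
    qed
  qed
qed

lemma sun_class_lemma:
  assumes "list_all (\<lambda>t. distinct (sun_vl t) \<and> list_all (\<lambda>x. x<n) (sun_vl t)) T"
    and "list_all (\<lambda>v. length (filter (\<lambda>t. v \<in> set (sun_vl t)) T) = 1) [0..<n]"
  shows "sun_class {0..<n} (set T)"
  unfolding sun_class_def
proof
  have "is_sun t = distinct (sun_vl t)" for t :: "nat sun" by (cases t) auto
  then show "\<forall>t\<in>set T. is_sun t \<and> sun_verts t \<subseteq> {0..<n}"
    using assms(1) by (auto simp: list_all_iff sun_verts_eq)
  show "\<forall>v\<in>{0..<n}. \<exists>!t. t \<in> set T \<and> v \<in> sun_verts t"
  proof
    fix v assume "v \<in> {0..<n}"
    then have "length (filter (\<lambda>t. v \<in> set (sun_vl t)) T) = 1"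
      using assms(2) by (auto simp: list_all_iff)
    from filter1[OF this] show "\<exists>!t. t \<in> set T \<and> v \<in> sun_verts t"
      unfolding sun_verts_eq by blast
  qed
qed

lemma edges_concat: "edges (concat Ls) = (\<Union>i<length Ls. edges (Ls!i))"
proof -
  have "set Ls = (\<lambda>i. Ls!i) ` {..<length Ls}" by (auto simp: in_set_conv_nth)
  then have "set (concat Ls) = (\<Union>i<length Ls. set (Ls!i))" by simp
  then show ?thesis unfolding edges_def by (simp add: image_UN)
qed

lemma main:
  fixes Ms :: "(nat \<times> nat) list list" and Ps :: "nat sun list list"
  assumes A: "list_all (\<lambda>L. list_all (\<lambda>(a,b). a<n \<and> b<n \<and> a\<noteq>b) L \<and>
      list_all (\<lambda>v. length (filter (\<lambda>(a,b). a=v \<or> b=v) L) = 1) [0..<n]) Ms"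
    and B: "list_all (\<lambda>T. list_all (\<lambda>t. distinct (sun_vl t) \<and> list_all (\<lambda>x. x<n) (sun_vl t)) T \<and>
      list_all (\<lambda>v. length (filter (\<lambda>t. v \<in> set (sun_vl t)) T) = 1) [0..<n]) Ps"
    and C: "list_all (\<lambda>i. list_all (\<lambda>i'. i = i' \<or> disj (Ms!i) (Ms!i')) [0..<length Ms]) [0..<length Ms]"
    and D: "list_all (\<lambda>j. list_all (\<lambda>j'. j = j' \<or> disj (sl (Ps!j)) (sl (Ps!j'))) [0..<length Ps]) [0..<length Ps]"
    and E: "list_all (\<lambda>L. list_all (\<lambda>T. disj L (sl T)) Ps) Ms"
    and F: "list_all (\<lambda>x. list_all (\<lambda>y. x = y \<or> (x,y) \<in> set (concat Ms @ concat (map sl Ps))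
              \<or> (y,x) \<in> set (concat Ms @ concat (map sl Ps))) [0..<n]) [0..<n]"
  shows "URD_decomp {0..<n} (length Ms) (length Ps)"
  unfolding URD_decomp_def
proof (intro exI[where x="\<lambda>i. edges (Ms!i)"] exI[where x="\<lambda>j. set (Ps!j)"] conjI)
  show "\<forall>i<length Ms. one_factor {0..<n} (edges (Ms ! i))"
    using A by (auto simp: list_all_length intro!: one_factor_lemma)
  show "\<forall>j<length Ps. sun_class {0..<n} (set (Ps ! j))"
    using B by (auto simp: list_all_length intro!: sun_class_lemma)
  show "\<forall>i<length Ms. \<forall>i'<length Ms. i \<noteq> i' \<longrightarrow> edges (Ms ! i) \<inter> edges (Ms ! i') = {}"
  proof (intro allI impI)
    fix i i' assume "i < length Ms" "i' < length Ms" "i \<noteq> i'"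
    then have "disj (Ms!i) (Ms!i')" using C by (auto simp: list_all_iff atLeast0LessThan)
    then show "edges (Ms ! i) \<inter> edges (Ms ! i') = {}" by (rule disj_lemma)
  qed
  show "\<forall>j<length Ps. \<forall>j'<length Ps. j \<noteq> j' \<longrightarrow> class_edges (set (Ps ! j)) \<inter> class_edges (set (Ps ! j')) = {}"
  proof (intro allI impI)
    fix i i' assume "i < length Ps" "i' < length Ps" "i \<noteq> i'"
    then have "disj (sl (Ps!i)) (sl (Ps!i'))" using D by (auto simp: list_all_iff atLeast0LessThan)
    then show "class_edges (set (Ps ! i)) \<inter> class_edges (set (Ps ! i')) = {}"
      unfolding class_edges_eq by (rule disj_lemma)
  qed
  show "\<forall>i<length Ms. \<forall>j<length Ps. edges (Ms ! i) \<inter> class_edges (set (Ps ! j)) = {}"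
  proof (intro allI impI)
    fix i j assume "i < length Ms" "j < length Ps"
    then have "disj (Ms!i) (sl (Ps!j))" using E by (auto simp: list_all_iff atLeast0LessThan)
    then show "edges (Ms ! i) \<inter> class_edges (set (Ps ! j)) = {}"
      unfolding class_edges_eq by (rule disj_lemma)
  qed
  show "(\<Union>i<length Ms. edges (Ms ! i)) \<union> (\<Union>j<length Ps. class_edges (set (Ps ! j))) = complete_edges {0..<n}"
  proof
    have "edges (Ms!i) \<subseteq> complete_edges {0..<n}" if "i < length Ms" for i
    proof -
      have "one_factor {0..<n} (edges (Ms!i))"
        using A that by (auto simp: list_all_length intro!: one_factor_lemma)
      then show ?thesis by (simp add: one_factor_def)
    qed
    moreover have "class_edges (set (Ps!j)) \<subseteq> complete_edges {0..<n}" if "j < length Ps" for j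
    proof
      fix e assume "e \<in> class_edges (set (Ps!j))"
      then obtain t where t: "t \<in> set (Ps!j)" "e \<in> sun_edges t" unfolding class_edges_def by auto
      have "sun_class {0..<n} (set (Ps!j))" using B that by (auto simp: list_all_length intro!: sun_class_lemma)
      then have "is_sun t" "sun_verts t \<subseteq> {0..<n}" using t(1) by (auto simp: sun_class_def)
      then show "e \<in> complete_edges {0..<n}" using t(2)
        by (cases t) (auto simp: complete_edges_def)
    qed
    ultimately show "(\<Union>i<length Ms. edges (Ms ! i)) \<union> (\<Union>j<length Ps. class_edges (set (Ps ! j))) \<subseteq> complete_edges {0..<n}"
      by blast
  next
    show "complete_edges {0..<n} \<subseteq> (\<Union>i<length Ms. edges (Ms ! i)) \<union> (\<Union>j<length Ps. class_edges (set (Ps ! j)))"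
    proof
      fix e assume "e \<in> complete_edges {0..<n}"
      then obtain x y where e: "e = {x,y}" "x<n" "y<n" "x\<noteq>y" unfolding complete_edges_def by auto
      then have "(x,y) \<in> set (concat Ms @ concat (map sl Ps)) \<or> (y,x) \<in> set (concat Ms @ concat (map sl Ps))"
      proof -
        let ?S = "set (concat Ms @ concat (map sl Ps))"
        have F': "\<forall>x\<in>{0..<n}. \<forall>y\<in>{0..<n}. x = y \<or> (x,y) \<in> ?S \<or> (y,x) \<in> ?S"
          using F by (simp only: list_all_iff set_upt)
        have "x \<in> {0..<n}" "y \<in> {0..<n}" using e by auto
        with F' have "x = y \<or> (x,y) \<in> ?S \<or> (y,x) \<in> ?S" by blast
        with e(4) show ?thesis by blast
      qed
      then have "e \<in> edges (concat Ms) \<or> e \<in> edges (concat (map sl Ps))"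
        using e(1) by (auto simp: edge_mem)
      then show "e \<in> (\<Union>i<length Ms. edges (Ms ! i)) \<union> (\<Union>j<length Ps. class_edges (set (Ps ! j)))"
        using edges_concat[of Ms] edges_concat[of "map sl Ps"] by (simp add: class_edges_eq)
    qed
  qed
qed

definition "Ms34 = ([[(0, 5), (1, 8), (2, 10), (3, 4), (6, 7), (9, 11)], [(0, 7), (1, 2), (3, 5), (4, 9), (6, 8), (10, 11)], [(0, 8), (1, 11), (2, 7), (3, 6), (4, 10), (5, 9)]] :: (nat\<times>nat) list list)"
definition "Ps34 = ([[(8, 3, 11, 4, 0, 2), (10, 5, 6, 1, 7, 9)], [(4, 6, 1, 7, 11, 5), (0, 2, 9, 10, 3, 8)], [(4, 0, 11, 2, 6, 5), (9, 10, 7, 1, 3, 8)], [(5, 8, 2, 4, 10, 6), (3, 7, 1, 9, 11, 0)]] :: nat sun list list)"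
definition "Ms72 = ([[(0, 6), (1, 4), (2, 8), (3, 5), (7, 9), (10, 11)], [(0, 3), (1, 8), (2, 6), (4, 10), (5, 9), (7, 11)], [(0, 4), (1, 6), (2, 3), (5, 7), (8, 11), (9, 10)], [(0, 10), (1, 9), (2, 11), (3, 7), (4, 6), (5, 8)], [(0, 1), (2, 4), (3, 11), (5, 6), (7, 10), (8, 9)], [(0, 7), (1, 3), (2, 9), (4, 8), (5, 10), (6, 11)], [(0, 8), (1, 11), (2, 7), (3, 10), (4, 5), (6, 9)]] :: (nat\<times>nat) list list)"
definition "Ps72 = ([[(0, 5, 11, 2, 1, 9), (6, 7, 8, 3, 4, 10)], [(10, 1, 2, 6, 7, 5), (4, 3, 9, 11, 8, 0)]] :: nat sun list list)"
definition "Ms110 = ([[(11, 0), (1, 10), (2, 9), (3, 8), (4, 7), (5, 6)], [(11, 1), (2, 0), (3, 10), (4, 9), (5, 8), (6, 7)], [(11, 2), (3, 1), (4, 0), (5, 10), (6, 9), (7, 8)], [(11, 3), (4, 2), (5, 1), (6, 0), (7, 10), (8, 9)], [(11, 4), (5, 3), (6, 2), (7, 1), (8, 0), (9, 10)], [(11, 5), (6, 4), (7, 3), (8, 2), (9, 1), (10, 0)], [(11, 6), (7, 5), (8, 4), (9, 3), (10, 2), (0, 1)], [(11, 7), (8, 6), (9, 5), (10, 4), (0, 3), (1, 2)], [(11, 8), (9, 7), (10, 6), (0, 5), (1, 4), (2, 3)], [(11, 9), (10, 8), (0, 7), (1, 6), (2, 5), (3, 4)], [(11, 10), (0, 9), (1,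 8), (2, 7), (3, 6), (4, 5)]] :: (nat\<times>nat) list list)"

lemma d34: "URD_decomp {0..<12::nat} 3 4"
proof -
  have "URD_decomp {0..<12::nat} (length Ms34) (length Ps34)"
    apply (rule main) apply (unfold Ms34_def Ps34_def disj_def sl_def) apply code_simp+ done
  then show ?thesis by (simp add: Ms34_def Ps34_def numeral_eq_Suc)
qed

lemma d72: "URD_decomp {0..<12::nat} 7 2"
proof -
  have "URD_decomp {0..<12::nat} (length Ms72) (length Ps72)"
    apply (rule main) apply (unfold Ms72_def Ps72_def disj_def sl_def) apply code_simp+ done
  then show ?thesis by (simp add: Ms72_def Ps72_def numeral_eq_Suc)
qed

lemma d110: "URD_decomp {0..<12::nat} 11 0"
proof -
  have "URD_decomp {0..<12::nat} (length Ms110) (length ([] :: nat sun list list))"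
    apply (rule main) apply (unfold Ms110_def disj_def sl_def) apply code_simp+ done
  then show ?thesis by (simp add: Ms110_def numeral_eq_Suc)
qed

theorem lemma3p2:
  shows "{(3, 4), (7, 2), (11, 0)} \<subseteq> URD 12"
  using d34 d72 d110 by (simp add: URD_def)

end
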